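(* Let $x,y:\mathbb{Z}\to\mathbb{R}$ be the coordinates of the vertices of a polygon indexed by $u\in\mathbb{Z}$, let $X+ih_1$, $Y+ih_2$ be their discrete analytic extensions, $h=(h_1,h_2)$, $P=(X,Y)$, and let $F:\mathbb{Z}^2\to\mathbb{R}$ satisfy $F(u+1,v)-F(u,v)=-[h(u+\tfrac12,v-\tfrac12),h(u+\tfrac12,v+\tfrac12)]$ and $F(u,v+1)-F(u,v)=[h(u-\tfrac12,v+\tfrac12),h(u+\tfrac12,v+\tfrac12)]$. For $(u,v)\in\mathbb{Z}^2$ let $v_1=P(u+1,v)-P(u,v)$, $v_2=P(u,v+1)-P(u,v)$, $v_3=P(u-1,v)-P(u,v)$, $v_4=P(u,v-1)-P(u,v)$, and let $A(u,v)=[v_3,v_2]+[v_1,v_4]$ (the area of the quadrangle with vertices $P(u+1,v),P(u,v+1),P(u-1,v),P(u,v-1)$). Then $$F(u+1,v)+F(u,v+1)+F(u-1,v)+F(u,v-1)-4F(u,v)=A(u,v).$$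
   Context: $[X,Y]$ is the $2\times2$ determinant with columns $X,Y$. With $(\mathbb{Z}^2)^*=(\mathbb{Z}+\tfrac12)^2$, functions $g:\mathbb{Z}^2\to\mathbb{R}$, $k:(\mathbb{Z}^2)^*\to\mathbb{R}$ form a discrete analytic function $g+ik$ if $g(u+1,v)-g(u,v)=k(u+\tfrac12,v+\tfrac12)-k(u+\tfrac12,v-\tfrac12)$ and $g(u,v+1)-g(u,v)=-(k(u+\tfrac12,v+\tfrac12)-k(u-\tfrac12,v+\tfrac12))$ for all $(u,v)$. The discrete analytic extension of $x$ is the unique $X+ih_1$ with $X(u,0)=x(u)$ and $h_1(u+\tfrac12,\tfrac12)=-h_1(u+\tfrac12,-\tfrac12)$; likewise $Y+ih_2$ for $y$. *)

theory Defs
  imports Complex_Main "HOL-Library.Product_Plus"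
begin

text \<open>Encoding: the dual lattice (Z+1/2)^2 is indexed by int x int, where the
pair (a, b) stands for the dual vertex (a + 1/2, b + 1/2).\<close>

definition det2 :: "real \<times> real \<Rightarrow> real \<times> real \<Rightarrow> real" where
  "det2 X Y = fst X * snd Y - snd X * fst Y"

definition discrete_analytic ::
  "(int \<Rightarrow> int \<Rightarrow> real) \<Rightarrow> (int \<Rightarrow> int \<Rightarrow> real) \<Rightarrow> bool" where
  "discrete_analytic g k \<longleftrightarrow>
     (\<forall>u v. g (u+1) v - g u v = k u v - k u (v-1)) \<and>
     (\<forall>u v. g u (v+1) - g u v = - (k u v - k (u-1) v))"

text \<open>(G, k) is the discrete analytic extension of x : Z \<Rightarrow> R.
  The condition k u 0 = - k u (-1) encodes h(u+1/2, 1/2) = - h(u+1/2, -1/2).\<close>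
definition discrete_analytic_extension ::
  "(int \<Rightarrow> real) \<Rightarrow> (int \<Rightarrow> int \<Rightarrow> real) \<Rightarrow> (int \<Rightarrow> int \<Rightarrow> real) \<Rightarrow> bool" where
  "discrete_analytic_extension x G k \<longleftrightarrow>
     discrete_analytic G k \<and> (\<forall>u. G u 0 = x u) \<and> (\<forall>u. k u 0 = - k u (-1))"

end

theory Submission
  imports Defs
begin

theorem mainTheorem12:
  fixes x y :: "int \<Rightarrow> real"
    and X Y h1 h2 F :: "int \<Rightarrow> int \<Rightarrow> real"
    and u v :: int
  assumes extX: "discrete_analytic_extension x X h1"
    and extY: "discrete_analytic_extension y Y h2"
    and F_u: "\<And>a b. F (a+1) b - F a b
                = - det2 (h1 a (b-1), h2 a (b-1)) (h1 a b, h2 a b)"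
    and F_v: "\<And>a b. F a (b+1) - F a b
                = det2 (h1 (a-1) b, h2 (a-1) b) (h1 a b, h2 a b)"
  shows "(let P = (\<lambda>a b. (X a b, Y a b));
              v1 = P (u+1) v - P u v;
              v2 = P u (v+1) - P u v;
              v3 = P (u-1) v - P u v;
              v4 = P u (v-1) - P u v
          in F (u+1) v + F u (v+1) + F (u-1) v + F u (v-1) - 4 * F u v
             = det2 v3 v2 + det2 v1 v4)"
proof -
  have aX: "\<And>a b. X (a+1) b - X a b = h1 a b - h1 a (b-1)" "\<And>a b. X a (b+1) - X a b = - (h1 a b - h1 (a-1) b)"
    using extX unfolding discrete_analytic_extension_def discrete_analytic_def by auto
  have aY: "\<And>a b. Y (a+1) b - Y a b = h2 a b - h2 a (b-1)" "\<And>a b. Y a (b+1) - Y a b = - (h2 a b - h2 (a-1) b)"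
    using extY unfolding discrete_analytic_extension_def discrete_analytic_def by auto
  have x1: "X (u+1) v = X u v + h1 u v - h1 u (v-1)" using aX(1)[of u v] by simp
  have x2: "X u (v+1) = X u v - h1 u v + h1 (u-1) v" using aX(2)[of u v] by simp
  have x3: "X (u-1) v = X u v - h1 (u-1) v + h1 (u-1) (v-1)" using aX(1)[of "u-1" v] by simp
  have x4: "X u (v-1) = X u v + h1 u (v-1) - h1 (u-1) (v-1)" using aX(2)[of u "v-1"] by simp
  have y1: "Y (u+1) v = Y u v + h2 u v - h2 u (v-1)" using aY(1)[of u v] by simp
  have y2: "Y u (v+1) = Y u v - h2 u v + h2 (u-1) v" using aY(2)[of u v] by simp
  have y3: "Y (u-1) v = Y u v - h2 (u-1) v + h2 (u-1) (v-1)" using aY(1)[of "u-1" v] by simp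
  have y4: "Y u (v-1) = Y u v + h2 u (v-1) - h2 (u-1) (v-1)" using aY(2)[of u "v-1"] by simp
  have f1: "F (u+1) v = F u v - det2 (h1 u (v-1), h2 u (v-1)) (h1 u v, h2 u v)" using F_u[of u v] by simp
  have f2: "F u (v+1) = F u v + det2 (h1 (u-1) v, h2 (u-1) v) (h1 u v, h2 u v)" using F_v[of u v] by simp
  have f3: "F (u-1) v = F u v + det2 (h1 (u-1) (v-1), h2 (u-1) (v-1)) (h1 (u-1) v, h2 (u-1) v)" using F_u[of "u-1" v] by simp
  have f4: "F u (v-1) = F u v - det2 (h1 (u-1) (v-1), h2 (u-1) (v-1)) (h1 u (v-1), h2 u (v-1))" using F_v[of u "v-1"] by simp
  show ?thesis unfolding Let_def x1 x2 x3 x4 y1 y2 y3 y4 f1 f2 f3 f4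
    by (simp add: det2_def algebra_simps)
qed

end
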